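(* Let $p(x,y)$ be a real polynomial in two variables and let $n\ge 2$. Then \[ \langle S_{2,n}\,p(S_{2,n},n)\rangle_n=\frac{n}{2}\langle p(S_{2,n},n)\rangle_n-\frac{n(n-2)}{2(2n-3)}\langle p(S_{2,n-1},n)\rangle_{n-1}, \] where $\langle\cdot\rangle_n$ denotes expectation over $(\Omega_n,P_n)$ and $\langle\cdot\rangle_{n-1}$ expectation over $(\Omega_{n-1},P_{n-1})$.
   Context: For $n\ge 1$, let $\Omega_n$ be the set of rooted plane (ordered) full binary trees with $n$ leaves (every internal node has exactly two children, left and right distinguished; $\Omega_1$ consists of the single-vertex tree). $P_n$ is the uniform probability measure on $\Omega_n$. Horton–Strahler ordering: every leaf has order 1; an internal node whose two children have different orders $r_1\neq r_2$ has order $\max\{r_1,r_2\}$; an internal node whose two children both have order $r$ has order $r+1$. A branch of order $r$ is a maximal connected path consisting of nodes all of order $r$. $S_{2,n}(\tau)$ is the number of branches of order $2$ in $\tau\in\Omega_n$. *)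

theory Defs
  imports Complex_Main
begin

datatype ftree = Leaf | Node ftree ftree

fun leaves :: "ftree \<Rightarrow> nat" where
  "leaves Leaf = 1"
| "leaves (Node l r) = leaves l + leaves r"

definition Omega :: "nat \<Rightarrow> ftree set" where
  "Omega n = {t. leaves t = n}"

fun hs_order :: "ftree \<Rightarrow> nat" where
  "hs_order Leaf = 1"
| "hs_order (Node l r) =
     (if hs_order l = hs_order r then hs_order l + 1 else max (hs_order l) (hs_order r))"

text \<open>A branch of order r is a maximal path of
nodes of order r; each such branch is identified by its topmost node, i.e. a node
of order r that is the root or whose parent has order different from r.
branch_tops r po t counts such nodes in t, where po is the order of the parent of
the root of t (0 if t is the whole tree, orders being at least 1).\<close>
fun branch_tops :: "nat \<Rightarrow> nat \<Rightarrow> ftree \<Rightarrow> nat" where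
  "branch_tops r po Leaf = (if hs_order Leaf = r \<and> po \<noteq> r then 1 else 0)"
| "branch_tops r po (Node l t) =
     (if hs_order (Node l t) = r \<and> po \<noteq> r then 1 else 0)
     + branch_tops r (hs_order (Node l t)) l + branch_tops r (hs_order (Node l t)) t"

definition S :: "nat \<Rightarrow> ftree \<Rightarrow> nat" where
  "S r t = branch_tops r 0 t"

definition expect :: "nat \<Rightarrow> (ftree \<Rightarrow> real) \<Rightarrow> real" where
  "expect n f = (\<Sum>t\<in>Omega n. f t) / real (card (Omega n))"

definition poly2 :: "(nat \<Rightarrow> nat \<Rightarrow> real) \<Rightarrow> nat \<Rightarrow> real \<Rightarrow> real \<Rightarrow> real" where
  "poly2 c d x y = (\<Sum>i\<le>d. \<Sum>j\<le>d. c i j * x ^ i * y ^ j)"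

end

theory Submission
  imports Defs "HOL-Library.Multiset"
begin

fun ch :: "ftree \<Rightarrow> nat" where
  "ch Leaf = 0"
| "ch (Node l r) = (if l = Leaf \<and> r = Leaf then 1 else ch l + ch r)"

lemma hs_order_ge1: "hs_order t \<ge> 1"
  by (induction t) auto

lemma hs_order_one: "hs_order t = 1 \<longleftrightarrow> t = Leaf"
proof (induction t)
  case Leaf then show ?case by simp
next
  case (Node l r) then show ?case using hs_order_ge1[of l] hs_order_ge1[of r] by auto
qed

lemma bt_ch: "branch_tops 2 po t + (if po = 2 \<and> hs_order t = 2 then 1 else 0) = ch t"
proof (induction t arbitrary: po)
  case Leaf then show ?case by simp
next
  case (Node l r)
  have l1: "hs_order l \<ge> 1" "hs_order r \<ge> 1" using hs_order_ge1 by blast+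
  have IHl: "branch_tops 2 (hs_order (Node l r)) l + (if hs_order (Node l r) = 2 \<and> hs_order l = 2 then 1 else 0) = ch l"
    using Node.IH(1) by blast
  have IHr: "branch_tops 2 (hs_order (Node l r)) r + (if hs_order (Node l r) = 2 \<and> hs_order r = 2 then 1 else 0) = ch r"
    using Node.IH(2) by blast
  show ?case
  proof (cases "l = Leaf \<and> r = Leaf")
    case True then show ?thesis by simp
  next
    case False
    then have "hs_order l \<noteq> 1 \<or> hs_order r \<noteq> 1" using hs_order_one by auto
    then show ?thesis using IHl IHr l1 False
      by (auto split: if_splits)
  qed
qed

lemma S_ch: "S 2 t = ch t"
  using bt_ch[of 0 t] by (simp add: S_def)

fun del :: "ftree \<Rightarrow> ftree list" where
  "del Leaf = []"
| "del (Node a b) = (if a = Leaf \<and> b \<noteq> Leaf then [b] else []) @ (if b = Leaf \<and> a \<noteq> Leaf then [a] else [])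
     @ map (\<lambda>x. Node x b) (del a) @ map (\<lambda>x. Node a x) (del b)"

fun ins :: "ftree \<Rightarrow> ftree list" where
  "ins Leaf = []"
| "ins (Node l r) = [Node Leaf (Node l r), Node (Node l r) Leaf]
     @ map (\<lambda>x. Node x r) (ins l) @ map (\<lambda>x. Node l x) (ins r)"

fun del2 :: "ftree \<Rightarrow> ftree list" where
  "del2 Leaf = []"
| "del2 (Node a b) = (if a = Leaf then [b] else []) @ (if b = Leaf then [a] else [])
     @ map (\<lambda>x. Node x b) (del2 a) @ map (\<lambda>x. Node a x) (del2 b)"

fun ins2 :: "ftree \<Rightarrow> ftree list" where
  "ins2 Leaf = [Node Leaf Leaf, Node Leaf Leaf]"
| "ins2 (Node l r) = [Node Leaf (Node l r), Node (Node l r) Leaf]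
     @ map (\<lambda>x. Node x r) (ins2 l) @ map (\<lambda>x. Node l x) (ins2 r)"

lemma count_mapL: "count (mset (map (\<lambda>x. Node x r) xs)) u =
   (case u of Leaf \<Rightarrow> 0 | Node a b \<Rightarrow> if b = r then count (mset xs) a else 0)"
  by (induction xs) (auto split: ftree.splits)

lemma count_mapR: "count (mset (map (\<lambda>x. Node l x) xs)) u =
   (case u of Leaf \<Rightarrow> 0 | Node a b \<Rightarrow> if a = l then count (mset xs) b else 0)"
  by (induction xs) (auto split: ftree.splits)

lemma count_del_ins: "count (mset (del t)) u = count (mset (ins u)) t"
proof (induction t arbitrary: u)
  case Leaf
  then show ?case by (cases u) (auto simp: count_mapL count_mapR simp del: mset_map)
next
  case (Node a b)
  then show ?case by (cases u) (auto simp: count_mapL count_mapR simp del: mset_map)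
qed

lemma count_del2_ins2: "count (mset (del2 t)) u = count (mset (ins2 u)) t"
proof (induction t arbitrary: u)
  case Leaf
  then show ?case by (cases u) (auto simp: count_mapL count_mapR simp del: mset_map)
next
  case (Node a b)
  then show ?case by (cases u) (auto simp: count_mapL count_mapR simp del: mset_map)
qed

lemma leaves_ge1: "leaves t \<ge> 1"
  by (induction t) auto

lemma finite_Omega: "finite (Omega n)"
proof (induction n rule: less_induct)
  case (less n)
  have "Omega n \<subseteq> {Leaf} \<union> (\<lambda>(l,r). Node l r) ` ((\<Union>i<n. Omega i) \<times> (\<Union>j<n. Omega j))"
  proof
    fix t assume "t \<in> Omega n"
    then have tn: "leaves t = n" by (simp add: Omega_def)
    show "t \<in> {Leaf} \<union> (\<lambda>(l,r). Node l r) ` ((\<Union>i<n. Omega i) \<times> (\<Union>j<n. Omega j))"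
    proof (cases t)
      case Leaf then show ?thesis by simp
    next
      case (Node l r)
      then have "leaves l < n" "leaves r < n" using tn leaves_ge1[of l] leaves_ge1[of r] by auto
      then have "(l, r) \<in> (\<Union>i<n. Omega i) \<times> (\<Union>j<n. Omega j)" by (auto simp: Omega_def)
      then show ?thesis using Node by force
    qed
  qed
  moreover have "finite ({Leaf} \<union> (\<lambda>(l,r). Node l r) ` ((\<Union>i<n. Omega i) \<times> (\<Union>j<n. Omega j)))"
    using less by auto
  ultimately show ?case by (rule finite_subset)
qed

fun comb :: "nat \<Rightarrow> ftree" where
  "comb 0 = Leaf" | "comb (Suc k) = Node Leaf (comb k)"

lemma leaves_comb: "leaves (comb k) = Suc k"
  by (induction k) auto

lemma card_Omega_pos: "n \<ge> 1 \<Longrightarrow> card (Omega n) > 0"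
proof -
  assume "n \<ge> 1"
  then have "comb (n - 1) \<in> Omega n" by (simp add: Omega_def leaves_comb)
  then show ?thesis using finite_Omega card_gt_0_iff by blast
qed

lemma del_leaves: "u \<in> set (del t) \<Longrightarrow> leaves t = Suc (leaves u)"
  by (induction t arbitrary: u) auto

lemma ins_leaves: "t \<in> set (ins u) \<Longrightarrow> leaves t = Suc (leaves u)"
  by (induction u arbitrary: t) auto

lemma del2_leaves: "u \<in> set (del2 t) \<Longrightarrow> leaves t = Suc (leaves u)"
  by (induction t arbitrary: u) auto

lemma ins2_leaves: "t \<in> set (ins2 u) \<Longrightarrow> leaves t = Suc (leaves u)"
  by (induction u arbitrary: t) auto

lemma del_notLeaf: "Leaf \<notin> set (del t)"
  by (induction t) auto

lemma del_nonempty: "del t \<noteq> [] \<Longrightarrow> t \<noteq> Leaf"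
  by auto

lemma del_ch: "u \<in> set (del t) \<Longrightarrow> ch u = ch t"
proof (induction t arbitrary: u)
  case Leaf then show ?case by simp
next
  case (Node a b)
  show ?case
  proof -
    consider "a = Leaf \<and> b \<noteq> Leaf \<and> u = b" | "b = Leaf \<and> a \<noteq> Leaf \<and> u = a"
      | x where "x \<in> set (del a)" "u = Node x b" | x where "x \<in> set (del b)" "u = Node a x"
      using Node.prems by (auto split: if_splits)
    then show ?thesis
    proof cases
      case 1 then show ?thesis by simp
    next
      case 2 then show ?thesis by simp
    next
      case 3
      then have "x \<noteq> Leaf" "a \<noteq> Leaf" using del_notLeaf by auto
      then show ?thesis using 3 Node.IH(1)[of x] by simp
    next
      case 4
      then have "x \<noteq> Leaf" "b \<noteq> Leaf" using del_notLeaf by auto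
      then show ?thesis using 4 Node.IH(2)[of x] by simp
    qed
  qed
qed

lemma len_del: "t \<noteq> Leaf \<Longrightarrow> length (del t) + 2 * ch t = leaves t"
proof (induction t)
  case Leaf then show ?case by simp
next
  case (Node a b)
  then show ?case
    by (cases "a = Leaf"; cases "b = Leaf") auto
qed

lemma len_ins: "length (ins u) = 2 * (leaves u - 1)"
proof (induction u)
  case Leaf then show ?case by simp
next
  case (Node a b)
  then show ?case using leaves_ge1[of a] leaves_ge1[of b] by auto
qed

lemma len_del2: "t \<noteq> Leaf \<Longrightarrow> length (del2 t) = leaves t"
proof (induction t)
  case Leaf then show ?case by simp
next
  case (Node a b)
  then show ?case
    by (cases "a = Leaf"; cases "b = Leaf") auto
qed

lemma len_ins2: "length (ins2 u) = 2 * (2 * leaves u - 1)"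
proof (induction u)
  case Leaf then show ?case by simp
next
  case (Node a b)
  then show ?case using leaves_ge1[of a] leaves_ge1[of b] by auto
qed

lemma sum_list_count:
  fixes f :: "ftree \<Rightarrow> real"
  assumes "finite B" "set xs \<subseteq> B"
  shows "(\<Sum>x\<leftarrow>xs. f x) = (\<Sum>y\<in>B. real (count (mset xs) y) * f y)"
  using assms(2)
proof (induction xs)
  case Nil then show ?case by simp
next
  case (Cons x xs)
  have "(\<Sum>y\<in>B. real (count (mset (x # xs)) y) * f y)
      = (\<Sum>y\<in>B. real (count (mset xs) y) * f y) + (\<Sum>y\<in>B. (if y = x then f y else 0))"
    by (subst sum.distrib[symmetric], rule sum.cong) (auto simp: algebra_simps)
  also have "(\<Sum>y\<in>B. (if y = x then f y else 0)) = f x"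
    using Cons.prems assms(1) by (simp add: sum.delta)
  finally show ?case using Cons by simp
qed

lemma double_count:
  fixes h :: "ftree \<Rightarrow> ftree \<Rightarrow> real"
  assumes fA: "finite A" and fB: "finite B"
    and D: "\<And>t. t \<in> A \<Longrightarrow> set (D t) \<subseteq> B" and I: "\<And>u. u \<in> B \<Longrightarrow> set (I u) \<subseteq> A"
    and C: "\<And>t u. count (mset (D t)) u = count (mset (I u)) t"
  shows "(\<Sum>t\<in>A. \<Sum>u\<leftarrow>D t. h t u) = (\<Sum>u\<in>B. \<Sum>t\<leftarrow>I u. h t u)"
proof -
  have "(\<Sum>t\<in>A. \<Sum>u\<leftarrow>D t. h t u) = (\<Sum>t\<in>A. \<Sum>u\<in>B. real (count (mset (D t)) u) * h t u)"
    using sum_list_count[OF fB D] by simp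
  also have "\<dots> = (\<Sum>u\<in>B. \<Sum>t\<in>A. real (count (mset (I u)) t) * h t u)"
    using C by (simp add: sum.swap[of _ A])
  also have "\<dots> = (\<Sum>u\<in>B. \<Sum>t\<leftarrow>I u. h t u)"
    using sum_list_count[OF fA I] by simp
  finally show ?thesis .
qed

lemma sum_list_const: "(\<Sum>x\<leftarrow>xs. (c::real)) = real (length xs) * c"
  by (induction xs) (auto simp: algebra_simps)

lemma key1:
  fixes g :: "nat \<Rightarrow> real"
  assumes n: "n \<ge> 2"
  shows "(\<Sum>t\<in>Omega n. (real n - 2 * real (ch t)) * g (ch t))
       = 2 * (real n - 2) * (\<Sum>u\<in>Omega (n-1). g (ch u))"
proof -
  have D: "set (del t) \<subseteq> Omega (n-1)" if "t \<in> Omega n" for t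
    using that del_leaves by (force simp: Omega_def)
  have I: "set (ins u) \<subseteq> Omega n" if "u \<in> Omega (n-1)" for u
    using that ins_leaves n by (force simp: Omega_def)
  have "(\<Sum>t\<in>Omega n. \<Sum>u\<leftarrow>del t. g (ch u)) = (\<Sum>u\<in>Omega (n-1). \<Sum>t\<leftarrow>ins u. g (ch u))"
    by (rule double_count[OF finite_Omega finite_Omega D I count_del_ins])
  moreover have "(\<Sum>t\<leftarrow>del t. g (ch t')) = X" if "False" for t t' X using that by simp
  moreover have "(\<Sum>u\<leftarrow>del t. g (ch u)) = (real n - 2 * real (ch t)) * g (ch t)" if "t \<in> Omega n" for t
  proof -
    have "(\<Sum>u\<leftarrow>del t. g (ch u)) = (\<Sum>u\<leftarrow>del t. g (ch t))"
      by (rule arg_cong[where f=sum_list], rule map_cong) (auto simp: del_ch)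
    also have "\<dots> = real (length (del t)) * g (ch t)" by (rule sum_list_const)
    also have "real (length (del t)) = real n - 2 * real (ch t)"
    proof -
      have "t \<noteq> Leaf" using that n by (auto simp: Omega_def)
      then have "length (del t) + 2 * ch t = n" using len_del that by (simp add: Omega_def)
      then show ?thesis by linarith
    qed
    finally show ?thesis .
  qed
  moreover have "(\<Sum>t\<leftarrow>ins u. g (ch u)) = 2 * (real n - 2) * g (ch u)" if "u \<in> Omega (n-1)" for u
  proof -
    have "length (ins u) = 2 * (n - 2)" using len_ins that by (simp add: Omega_def)
    then have "real (length (ins u)) = 2 * (real n - 2)" using n by simp
    then show ?thesis by (simp add: sum_list_const)
  qed
  ultimately show ?thesis by (simp add: sum_distrib_left)
qed

lemma key2:
  assumes n: "n \<ge> 2"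
  shows "real n * card (Omega n) = 2 * (2 * real n - 3) * card (Omega (n-1))"
proof -
  have D: "set (del2 t) \<subseteq> Omega (n-1)" if "t \<in> Omega n" for t
    using that del2_leaves by (force simp: Omega_def)
  have I: "set (ins2 u) \<subseteq> Omega n" if "u \<in> Omega (n-1)" for u
    using that ins2_leaves n by (force simp: Omega_def)
  have "(\<Sum>t\<in>Omega n. \<Sum>u\<leftarrow>del2 t. (1::real)) = (\<Sum>u\<in>Omega (n-1). \<Sum>t\<leftarrow>ins2 u. 1)"
    by (rule double_count[OF finite_Omega finite_Omega D I count_del2_ins2])
  moreover have "(\<Sum>u\<leftarrow>del2 t. (1::real)) = real n" if "t \<in> Omega n" for t
  proof -
    have "t \<noteq> Leaf" using that n by (auto simp: Omega_def)
    then show ?thesis using len_del2 that by (simp add: Omega_def sum_list_const)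
  qed
  moreover have "(\<Sum>t\<leftarrow>ins2 u. (1::real)) = 2 * (2 * real n - 3)" if "u \<in> Omega (n-1)" for u
  proof -
    have "length (ins2 u) = 2 * (2 * (n - 1) - 1)" using len_ins2 that by (simp add: Omega_def)
    then have "real (length (ins2 u)) = 2 * (2 * real n - 3)" using n by (simp add: of_nat_diff)
    then show ?thesis by (simp add: sum_list_const)
  qed
  ultimately show ?thesis by (simp add: mult.commute)
qed

theorem proposition1:
  fixes c :: "nat \<Rightarrow> nat \<Rightarrow> real" and d n :: nat
  assumes "n \<ge> 2"
  shows "expect n (\<lambda>t. real (S 2 t) * poly2 c d (real (S 2 t)) (real n))
       = real n / 2 * expect n (\<lambda>t. poly2 c d (real (S 2 t)) (real n))
         - real n * (real n - 2) / (2 * (2 * real n - 3))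
           * expect (n - 1) (\<lambda>t. poly2 c d (real (S 2 t)) (real n))"
proof -
  define g where "g k = poly2 c d (real k) (real n)" for k
  define A where "A = (\<Sum>t\<in>Omega n. real (ch t) * g (ch t))"
  define B where "B = (\<Sum>t\<in>Omega n. g (ch t))"
  define B' where "B' = (\<Sum>t\<in>Omega (n-1). g (ch t))"
  define C where "C = real (card (Omega n))"
  define C' where "C' = real (card (Omega (n-1)))"
  have k1: "real n * B - 2 * A = 2 * (real n - 2) * B'"
  proof -
    have "(\<Sum>t\<in>Omega n. (real n - 2 * real (ch t)) * g (ch t)) = real n * B - 2 * A"
      by (simp add: A_def B_def algebra_simps sum_subtractf sum_distrib_left)
    then show ?thesis using key1[OF assms, of g] by (simp add: B'_def)
  qed
  have k2: "real n * C = 2 * (2 * real n - 3) * C'"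
    using key2[OF assms] by (simp add: C_def C'_def)
  have Cp: "C' > 0" using card_Omega_pos[of "n-1"] assms by (simp add: C'_def)
  have h3: "2 * real n - 3 > 0" using assms by simp
  have Cp2: "C > 0" using k2 Cp h3 assms
    by (metis C_def card_Omega_pos le_trans nat_le_linear not_numeral_le_zero of_nat_0_less_iff one_le_numeral)
  have lhs: "expect n (\<lambda>t. real (S 2 t) * poly2 c d (real (S 2 t)) (real n)) = A / C"
    by (simp add: expect_def S_ch A_def C_def g_def)
  have r1: "expect n (\<lambda>t. poly2 c d (real (S 2 t)) (real n)) = B / C"
    by (simp add: expect_def S_ch B_def C_def g_def)
  have r2: "expect (n-1) (\<lambda>t. poly2 c d (real (S 2 t)) (real n)) = B' / C'"
    by (simp add: expect_def S_ch B'_def C'_def g_def)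
  have "A = real n / 2 * B - (real n - 2) * B'" using k1 by (simp add: field_simps)
  moreover have "1 / C = real n / (2 * (2 * real n - 3) * C')"
    using k2 Cp Cp2 h3 by (simp add: field_simps)
  ultimately have "A / C = real n / 2 * (B / C) - real n * (real n - 2) / (2 * (2 * real n - 3)) * (B' / C')"
  proof -
    assume a1: "A = real n / 2 * B - (real n - 2) * B'" and a2: "1 / C = real n / (2 * (2 * real n - 3) * C')"
    have "A / C = real n / 2 * (B / C) - (real n - 2) * B' * (1 / C)" using a1 by (simp add: diff_divide_distrib)
    also have "\<dots> = real n / 2 * (B / C) - (real n - 2) * B' * (real n / (2 * (2 * real n - 3) * C'))" using a2 by simp
    also have "\<dots> = real n / 2 * (B / C) - real n * (real n - 2) / (2 * (2 * real n - 3)) * (B' / C')" by simp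
    finally show ?thesis .
  qed
  then show ?thesis using lhs r1 r2 by simp
qed

end
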